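(* For any finite, simple, connected graph $G$ and any $n\ge 1$, $\gamma_P(G)\le\gamma_P(G\,\Box\,P_n)\le\gamma(G)$. In particular, $\gamma_P(G)\le\gamma_P(G\,\Box\,P_2)\le\min\{\gamma(G),Z(G)\}$, and if $\gamma_P(G)=\gamma(G)$ then $\gamma_P(G\,\Box\,P_n)=\gamma(G)$.
   Context: $P_n$ is the path of order $n$. The Cartesian product $G\,\Box\,H$ has vertex set $V(G)\times V(H)$, with $(g,h)$ adjacent to $(g',h')$ iff either $g=g'$ and $hh'\in E(H)$, or $h=h'$ and $gg'\in E(G)$. $\gamma(G)$ is the domination number. For $U\subseteq V$, $cl(U)$ is obtained by coloring $U$ black and repeatedly applying: if a black vertex has exactly one white neighbor, that neighbor becomes black. $U$ is a zero forcing set if $cl(U)=V$, and $Z(G)$ is the minimum size of a zero forcing set. $S$ is a power dominating set if $cl(N[S])=V$; $\gamma_P$ is the minimum size of a power dominating set. *)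

theory Defs
  imports Main
begin

definition simple_graph :: "'a set \<Rightarrow> ('a \<Rightarrow> 'a \<Rightarrow> bool) \<Rightarrow> bool" where
  "simple_graph V E \<longleftrightarrow> finite V \<and> (\<forall>x y. E x y \<longrightarrow> x \<in> V \<and> y \<in> V)
     \<and> (\<forall>x y. E x y \<longrightarrow> E y x) \<and> (\<forall>x. \<not> E x x)"

definition connected_graph :: "'a set \<Rightarrow> ('a \<Rightarrow> 'a \<Rightarrow> bool) \<Rightarrow> bool" where
  "connected_graph V E \<longleftrightarrow> V \<noteq> {} \<and>
     (\<forall>x\<in>V. \<forall>y\<in>V. (\<lambda>u v. u \<in> V \<and> v \<in> V \<and> E u v)\<^sup>*\<^sup>* x y)"

definition path_adj :: "nat \<Rightarrow> nat \<Rightarrow> bool" where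
  "path_adj i j \<longleftrightarrow> i = Suc j \<or> j = Suc i"

definition path_V :: "nat \<Rightarrow> nat set" where
  "path_V n = {0..<n}"

definition cart_V :: "'a set \<Rightarrow> 'b set \<Rightarrow> ('a \<times> 'b) set" where
  "cart_V V W = V \<times> W"

definition cart_E :: "('a \<Rightarrow> 'a \<Rightarrow> bool) \<Rightarrow> ('b \<Rightarrow> 'b \<Rightarrow> bool) \<Rightarrow> 'a \<times> 'b \<Rightarrow> 'a \<times> 'b \<Rightarrow> bool" where
  "cart_E E F p q \<longleftrightarrow> (fst p = fst q \<and> F (snd p) (snd q)) \<or> (snd p = snd q \<and> E (fst p) (fst q))"

definition nbrs :: "'a set \<Rightarrow> ('a \<Rightarrow> 'a \<Rightarrow> bool) \<Rightarrow> 'a \<Rightarrow> 'a set" where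
  "nbrs V E u = {w \<in> V. E u w}"

definition closed_nbhd :: "'a set \<Rightarrow> ('a \<Rightarrow> 'a \<Rightarrow> bool) \<Rightarrow> 'a set \<Rightarrow> 'a set" where
  "closed_nbhd V E S = S \<union> (\<Union>u\<in>S. nbrs V E u)"

text \<open>Closure under the color-change rule: a black vertex with exactly one white
  neighbour forces that neighbour to become black.\<close>
inductive_set cl :: "'a set \<Rightarrow> ('a \<Rightarrow> 'a \<Rightarrow> bool) \<Rightarrow> 'a set \<Rightarrow> 'a set"
  for V E U where
  base: "u \<in> U \<Longrightarrow> u \<in> V \<Longrightarrow> u \<in> cl V E U"
| force: "u \<in> cl V E U \<Longrightarrow> w \<in> nbrs V E u \<Longrightarrow>
          (\<forall>w'\<in>nbrs V E u. w' \<noteq> w \<longrightarrow> w' \<in> cl V E U) \<Longrightarrow> w \<in> cl V E U"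

definition zero_forcing_set :: "'a set \<Rightarrow> ('a \<Rightarrow> 'a \<Rightarrow> bool) \<Rightarrow> 'a set \<Rightarrow> bool" where
  "zero_forcing_set V E U \<longleftrightarrow> U \<subseteq> V \<and> cl V E U = V"

definition dominating_set :: "'a set \<Rightarrow> ('a \<Rightarrow> 'a \<Rightarrow> bool) \<Rightarrow> 'a set \<Rightarrow> bool" where
  "dominating_set V E S \<longleftrightarrow> S \<subseteq> V \<and> closed_nbhd V E S = V"

definition power_dominating_set :: "'a set \<Rightarrow> ('a \<Rightarrow> 'a \<Rightarrow> bool) \<Rightarrow> 'a set \<Rightarrow> bool" where
  "power_dominating_set V E S \<longleftrightarrow> S \<subseteq> V \<and> cl V E (closed_nbhd V E S) = V"

definition zero_forcing_number :: "'a set \<Rightarrow> ('a \<Rightarrow> 'a \<Rightarrow> bool) \<Rightarrow> nat" where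
  "zero_forcing_number V E = Min (card ` {U. zero_forcing_set V E U})"

definition domination_number :: "'a set \<Rightarrow> ('a \<Rightarrow> 'a \<Rightarrow> bool) \<Rightarrow> nat" where
  "domination_number V E = Min (card ` {S. dominating_set V E S})"

definition power_domination_number :: "'a set \<Rightarrow> ('a \<Rightarrow> 'a \<Rightarrow> bool) \<Rightarrow> nat" where
  "power_domination_number V E = Min (card ` {S. power_dominating_set V E S})"

end

theory Submission
  imports Defs
begin

lemma cl_sub_mem: "x \<in> cl V E U \<Longrightarrow> x \<in> V"
  apply (erule cl.induct)
  apply assumption
  unfolding nbrs_def
  apply blast
  done

lemma cl_sub: "cl V E U \<subseteq> V"
  by (rule subsetI, erule cl_sub_mem)

lemma cl_self: "U \<subseteq> V \<Longrightarrow> U \<subseteq> cl V E U"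
proof
  fix x assume "U \<subseteq> V" "x \<in> U" then show "x \<in> cl V E U"
    by (intro cl.base) auto
qed

lemma pds_V: "power_dominating_set V E V"
proof -
  have "V \<subseteq> closed_nbhd V E V" unfolding closed_nbhd_def by (rule Un_upper1)
  moreover have "closed_nbhd V E V \<subseteq> cl V E (closed_nbhd V E V)"
  proof
    fix x assume "x \<in> closed_nbhd V E V"
    moreover have "closed_nbhd V E V \<subseteq> V" unfolding closed_nbhd_def nbrs_def by auto
    ultimately show "x \<in> cl V E (closed_nbhd V E V)" by (intro cl.base) auto
  qed
  ultimately have "V \<subseteq> cl V E (closed_nbhd V E V)" by (rule order_trans)
  hence "cl V E (closed_nbhd V E V) = V" by (intro equalityI cl_sub)
  thus ?thesis unfolding power_dominating_set_def by simp
qed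

lemma ds_V: "dominating_set V E V"
  unfolding dominating_set_def closed_nbhd_def nbrs_def by auto

lemma zfs_V: "zero_forcing_set V E V"
  unfolding zero_forcing_set_def by (simp add: equalityI cl_sub cl_self)

lemma fin_card_img:
  assumes "finite V" "\<And>S. P S \<Longrightarrow> S \<subseteq> V"
  shows "finite (card ` {S. P S})"
proof -
  have "{S. P S} \<subseteq> Pow V" using assms(2) by auto
  hence "finite {S. P S}" using assms(1) finite_subset by blast
  thus ?thesis by simp
qed

lemma pdn_le:
  assumes "finite V" "power_dominating_set V E S"
  shows "power_domination_number V E \<le> card S"
proof -
  have fin: "finite (card ` {S. power_dominating_set V E S})"
    by (rule fin_card_img[OF assms(1)]) (simp add: power_dominating_set_def)
  have "card S \<in> card ` {S. power_dominating_set V E S}" using assms(2) by blast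
  with fin show ?thesis unfolding power_domination_number_def by (rule Min_le)
qed

lemma pdn_ex:
  assumes "finite V"
  shows "\<exists>S. power_dominating_set V E S \<and> card S = power_domination_number V E"
proof -
  have fin: "finite (card ` {S. power_dominating_set V E S})"
    by (rule fin_card_img[OF assms(1)]) (simp add: power_dominating_set_def)
  have ne: "card ` {S. power_dominating_set V E S} \<noteq> {}" using pds_V by blast
  have "power_domination_number V E \<in> card ` {S. power_dominating_set V E S}"
    unfolding power_domination_number_def using fin ne by (rule Min_in)
  then obtain T where "T \<in> {S. power_dominating_set V E S}" "power_domination_number V E = card T"
    by (rule imageE)
  thus ?thesis by auto
qed

lemma dn_ex:
  assumes "finite V"
  shows "\<exists>S. dominating_set V E S \<and> card S = domination_number V E"
proof -
  have fin: "finite (card ` {S. dominating_set V E S})"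
    by (rule fin_card_img[OF assms(1)]) (simp add: dominating_set_def)
  have ne: "card ` {S. dominating_set V E S} \<noteq> {}" using ds_V by blast
  have "domination_number V E \<in> card ` {S. dominating_set V E S}"
    unfolding domination_number_def using fin ne by (rule Min_in)
  then obtain T where "T \<in> {S. dominating_set V E S}" "domination_number V E = card T"
    by (rule imageE)
  thus ?thesis by auto
qed

lemma zfn_ex:
  assumes "finite V"
  shows "\<exists>S. zero_forcing_set V E S \<and> card S = zero_forcing_number V E"
proof -
  have fin: "finite (card ` {S. zero_forcing_set V E S})"
    by (rule fin_card_img[OF assms(1)]) (simp add: zero_forcing_set_def)
  have ne: "card ` {S. zero_forcing_set V E S} \<noteq> {}" using zfs_V by blast
  have "zero_forcing_number V E \<in> card ` {S. zero_forcing_set V E S}"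
    unfolding zero_forcing_number_def using fin ne by (rule Min_in)
  then obtain T where "T \<in> {S. zero_forcing_set V E S}" "zero_forcing_number V E = card T"
    by (rule imageE)
  thus ?thesis by auto
qed

lemma nbrs_prod:
  "(x, j) \<in> nbrs (cart_V V (path_V n)) (cart_E E path_adj) (u, i) \<longleftrightarrow>
     x \<in> V \<and> j < n \<and> ((x = u \<and> path_adj i j) \<or> (j = i \<and> E u x))"
  by (auto simp: nbrs_def cart_V_def cart_E_def path_V_def)

lemma L1:
  assumes fin: "finite V" and n: "n \<ge> 1"
  shows "power_domination_number V E
           \<le> power_domination_number (cart_V V (path_V n)) (cart_E E path_adj)"
proof -
  define P where "P = cart_V V (path_V n)"
  define F where "F = cart_E E path_adj"
  have finP: "finite P" using fin by (simp add: P_def cart_V_def path_V_def)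
  obtain S where S: "power_dominating_set P F S" "card S = power_domination_number P F"
    using pdn_ex[OF finP] by blast
  define B where "B = cl V E (closed_nbhd V E (fst ` S))"
  have SP: "S \<subseteq> P" using S(1) by (simp add: power_dominating_set_def)
  hence SV: "fst ` S \<subseteq> V" by (auto simp: P_def cart_V_def)
  have key: "fst x \<in> B" if "x \<in> cl P F (closed_nbhd P F S)" for x
    using that
  proof (induction rule: cl.induct)
    case (base u)
    then show ?case
    proof (cases "u \<in> S")
      case True
      hence "fst u \<in> closed_nbhd V E (fst ` S)" unfolding closed_nbhd_def by blast
      moreover have "fst u \<in> V" using True SV by blast
      ultimately show ?thesis unfolding B_def by (rule cl.base)
    next
      case False
      then obtain y where y: "y \<in> S" "u \<in> nbrs P F y" using base(1)
        by (auto simp: closed_nbhd_def)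
      have uV: "fst u \<in> V" using base(2) by (auto simp: P_def cart_V_def)
      have "fst u = fst y \<or> E (fst y) (fst u)" using y(2)
        by (auto simp: nbrs_def F_def cart_E_def)
      hence "fst u \<in> closed_nbhd V E (fst ` S)"
        using y(1) uV by (auto simp: closed_nbhd_def nbrs_def)
      then show ?thesis unfolding B_def using uV by (rule cl.base)
    qed
  next
    case (force u w)
    obtain u0 i where u: "u = (u0, i)" by (cases u)
    obtain w0 j where w: "w = (w0, j)" by (cases w)
    have wn: "w0 \<in> V \<and> j < n \<and> ((w0 = u0 \<and> path_adj i j) \<or> (j = i \<and> E u0 w0))"
      using force(2) unfolding u w P_def F_def nbrs_prod .
    show ?case
    proof (cases "w0 = u0")
      case True then show ?thesis using force(3) u w by simp
    next
      case False
      hence ji: "j = i" "E u0 w0" using wn by auto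
      have uP: "u \<in> P" by (rule cl_sub_mem[OF force(1)])
      hence "i < n" by (auto simp: u P_def cart_V_def path_V_def)
      have "w0 \<in> B" unfolding B_def
      proof (rule cl.force)
        show "u0 \<in> cl V E (closed_nbhd V E (fst ` S))" using force(3) u B_def by simp
        show "w0 \<in> nbrs V E u0" using wn ji by (simp add: nbrs_def)
        show "\<forall>w'\<in>nbrs V E u0. w' \<noteq> w0 \<longrightarrow> w' \<in> cl V E (closed_nbhd V E (fst ` S))"
        proof (intro ballI impI)
          fix w' assume a: "w' \<in> nbrs V E u0" "w' \<noteq> w0"
          have "(w', i) \<in> nbrs P F u" unfolding u P_def F_def nbrs_prod
            using a `i < n` by (auto simp: nbrs_def)
          moreover have "(w', i) \<noteq> w" using a w by auto
          ultimately have "(w', i) \<in> cl P F (closed_nbhd P F S) \<and> fst (w', i) \<in> B"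
            using force(4) by blast
          then show "w' \<in> cl V E (closed_nbhd V E (fst ` S))"
            unfolding B_def by simp
        qed
      qed
      then show ?thesis using w by simp
    qed
  qed
  have "V \<subseteq> B"
  proof
    fix v assume "v \<in> V"
    hence "(v, 0) \<in> P" using n by (auto simp: P_def cart_V_def path_V_def)
    hence "(v, 0) \<in> cl P F (closed_nbhd P F S)" using S(1) by (simp add: power_dominating_set_def)
    thus "v \<in> B" using key[of "(v, 0)"] by simp
  qed
  hence "B = V" using cl_sub[of V E "closed_nbhd V E (fst ` S)"] unfolding B_def
    by (intro equalityI)
  hence "power_dominating_set V E (fst ` S)"
    using SV unfolding power_dominating_set_def B_def by simp
  hence "power_domination_number V E \<le> card (fst ` S)" by (rule pdn_le[OF fin])
  also have "\<dots> \<le> card S" using finite_subset[OF SP finP] by (rule card_image_le)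
  finally show ?thesis using S(2) P_def F_def by simp
qed

lemma L2:
  assumes fin: "finite V" and n: "n \<ge> 1"
  shows "power_domination_number (cart_V V (path_V n)) (cart_E E path_adj)
           \<le> domination_number V E"
proof -
  define P where "P = cart_V V (path_V n)"
  define F where "F = cart_E E path_adj"
  have finP: "finite P" using fin by (simp add: P_def cart_V_def path_V_def)
  obtain D where D: "dominating_set V E D" "card D = domination_number V E"
    using dn_ex[OF fin] by blast
  define S where "S = D \<times> {0::nat}"
  define C where "C = cl P F (closed_nbhd P F S)"
  have DV: "D \<subseteq> V" using D(1) by (simp add: dominating_set_def)
  have SP: "S \<subseteq> P" using DV n by (auto simp: S_def P_def cart_V_def path_V_def)
  have main: "\<forall>v\<in>V. (v, k) \<in> C" if "k < n" for k
    using that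
  proof (induction k rule: less_induct)
    case (less k)
    show ?case
    proof (cases k)
      case 0
      show ?thesis
      proof
        fix v assume v: "v \<in> V"
        hence vP: "(v, k) \<in> P" using less(2) by (auto simp: P_def cart_V_def path_V_def)
        have "v \<in> closed_nbhd V E D" using D(1) v by (simp add: dominating_set_def)
        then consider "v \<in> D" | u where "u \<in> D" "v \<in> nbrs V E u"
          by (auto simp: closed_nbhd_def)
        hence "(v, k) \<in> closed_nbhd P F S"
        proof cases
          case 1 then show ?thesis using 0 by (auto simp: S_def closed_nbhd_def)
        next
          case 2
          hence "(v, 0) \<in> nbrs P F (u, 0)" unfolding P_def F_def nbrs_prod
            using less(2) 0 by (auto simp: nbrs_def)
          then show ?thesis using 2 0 unfolding closed_nbhd_def S_def by blast
        qed
        then show "(v, k) \<in> C" unfolding C_def using vP by (rule cl.base)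
      qed
    next
      case (Suc m)
      have IHm: "\<forall>v\<in>V. (v, m) \<in> C" using less Suc by simp
      show ?thesis
      proof
        fix v assume v: "v \<in> V"
        show "(v, k) \<in> C" unfolding C_def
        proof (rule cl.force)
          show "(v, m) \<in> cl P F (closed_nbhd P F S)" using IHm v C_def by simp
          show "(v, k) \<in> nbrs P F (v, m)" unfolding P_def F_def nbrs_prod
            using v less(2) Suc by (simp add: path_adj_def)
          show "\<forall>w'\<in>nbrs P F (v, m). w' \<noteq> (v, k) \<longrightarrow> w' \<in> cl P F (closed_nbhd P F S)"
          proof (intro ballI impI)
            fix w' assume a: "w' \<in> nbrs P F (v, m)" "w' \<noteq> (v, k)"
            obtain x j where w': "w' = (x, j)" by (cases w')
            have h: "x \<in> V \<and> j < n \<and> ((x = v \<and> path_adj m j) \<or> (j = m \<and> E v x))"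
              using a(1) unfolding w' P_def F_def nbrs_prod .
            have "j < k" using h a(2) w' Suc by (auto simp: path_adj_def)
            hence "\<forall>v\<in>V. (v, j) \<in> C" using less(1) less(2) by simp
            thus "w' \<in> cl P F (closed_nbhd P F S)" using h w' C_def by simp
          qed
        qed
      qed
    qed
  qed
  have "C = P"
  proof
    show "C \<subseteq> P" unfolding C_def by (rule cl_sub)
    show "P \<subseteq> C" using main by (auto simp: P_def cart_V_def path_V_def)
  qed
  hence "power_dominating_set P F S" using SP by (simp add: power_dominating_set_def C_def)
  hence "power_domination_number P F \<le> card S" by (rule pdn_le[OF finP])
  also have "card S = card D" by (simp add: S_def card_cartesian_product)
  finally show ?thesis using D(2) P_def F_def by simp
qed

lemma L3:
  assumes fin: "finite V"
  shows "power_domination_number (cart_V V (path_V 2)) (cart_E E path_adj)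
           \<le> zero_forcing_number V E"
proof -
  define P where "P = cart_V V (path_V 2)"
  define F where "F = cart_E E path_adj"
  have finP: "finite P" using fin by (simp add: P_def cart_V_def path_V_def)
  obtain Z where Z: "zero_forcing_set V E Z" "card Z = zero_forcing_number V E"
    using zfn_ex[OF fin] by blast
  define S where "S = Z \<times> {0::nat}"
  define C where "C = cl P F (closed_nbhd P F S)"
  have ZV: "Z \<subseteq> V" using Z(1) by (simp add: zero_forcing_set_def)
  have SP: "S \<subseteq> P" using ZV by (auto simp: S_def P_def cart_V_def path_V_def)
  have key: "(v, 0) \<in> C \<and> (v, 1) \<in> C" if "v \<in> cl V E Z" for v
    using that
  proof (induction rule: cl.induct)
    case (base u)
    have a0: "(u, 0) \<in> closed_nbhd P F S" using base by (auto simp: S_def closed_nbhd_def)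
    have "(u, 1) \<in> nbrs P F (u, 0)" unfolding P_def F_def nbrs_prod
      using base by (simp add: path_adj_def)
    hence a1: "(u, 1) \<in> closed_nbhd P F S" using base unfolding closed_nbhd_def S_def by blast
    have p0: "(u, 0) \<in> P" and p1: "(u, 1) \<in> P" using base
      by (auto simp: P_def cart_V_def path_V_def)
    have "(u, 0) \<in> C" unfolding C_def using a0 p0 by (rule cl.base)
    moreover have "(u, 1) \<in> C" unfolding C_def using a1 p1 by (rule cl.base)
    ultimately show ?case by simp
  next
    case (force u w)
    have IHu: "(u, 0) \<in> C" "(u, 1) \<in> C" using force(3) by auto
    have wV: "w \<in> V" "E u w" using force(2) by (auto simp: nbrs_def)
    have g: "(w, i) \<in> C" if i: "i < 2" for i :: nat
      unfolding C_def
    proof (rule cl.force)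
      have "(u, i) \<in> C" using i IHu by (cases i) auto
      thus "(u, i) \<in> cl P F (closed_nbhd P F S)" unfolding C_def .
      show "(w, i) \<in> nbrs P F (u, i)" unfolding P_def F_def nbrs_prod
        using wV i by simp
      show "\<forall>w'\<in>nbrs P F (u, i). w' \<noteq> (w, i) \<longrightarrow> w' \<in> cl P F (closed_nbhd P F S)"
      proof (intro ballI impI)
        fix w' assume a: "w' \<in> nbrs P F (u, i)" "w' \<noteq> (w, i)"
        obtain x j where w': "w' = (x, j)" by (cases w')
        have h: "x \<in> V \<and> j < 2 \<and> ((x = u \<and> path_adj i j) \<or> (j = i \<and> E u x))"
          using a(1) unfolding w' P_def F_def nbrs_prod .
        have "(x, j) \<in> C"
        proof (cases "x = u \<and> path_adj i j")
          case True
          hence "j = 0 \<or> j = 1" using h by auto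
          thus ?thesis using True IHu by auto
        next
          case False
          hence ji: "j = i" "E u x" "x \<in> V" using h by auto
          hence xn: "x \<in> nbrs V E u" "x \<noteq> w" using a(2) w' by (auto simp: nbrs_def)
          have "x \<noteq> w \<longrightarrow> x \<in> cl V E Z \<and> (x, 0) \<in> C \<and> (x, 1) \<in> C"
            by (rule bspec[OF force(4) xn(1)])
          hence "x \<in> cl V E Z \<and> (x, 0) \<in> C \<and> (x, 1) \<in> C" using xn(2) by (rule mp)
          hence "(x, 0) \<in> C" "(x, 1) \<in> C" by (rule conjunct1[OF conjunct2], rule conjunct2[OF conjunct2])
          thus ?thesis using ji(1) i by (cases i) auto
        qed
        thus "w' \<in> cl P F (closed_nbhd P F S)" using w' unfolding C_def by simp
      qed
    qed
    show ?case using g[of 0] g[of 1] by simp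
  qed
  have "C = P"
  proof
    show "C \<subseteq> P" unfolding C_def by (rule cl_sub)
    show "P \<subseteq> C"
    proof
      fix p assume "p \<in> P"
      then obtain v i where p: "p = (v, i)" "v \<in> V" "i < 2"
        by (auto simp: P_def cart_V_def path_V_def)
      have "v \<in> cl V E Z" using Z(1) p by (simp add: zero_forcing_set_def)
      then show "p \<in> C" using key p by (cases i) auto
    qed
  qed
  hence "power_dominating_set P F S" using SP by (simp add: power_dominating_set_def C_def)
  hence "power_domination_number P F \<le> card S" by (rule pdn_le[OF finP])
  also have "card S = card Z" by (simp add: S_def card_cartesian_product)
  finally show ?thesis using Z(2) P_def F_def by simp
qed

theorem mainTheorem11:
  fixes V :: "'a set" and E :: "'a \<Rightarrow> 'a \<Rightarrow> bool"
  assumes "simple_graph V E" and "connected_graph V E"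
  shows "(\<forall>n\<ge>1.
            power_domination_number V E
              \<le> power_domination_number (cart_V V (path_V n)) (cart_E E path_adj)
          \<and> power_domination_number (cart_V V (path_V n)) (cart_E E path_adj)
              \<le> domination_number V E)
       \<and> (power_domination_number V E
              \<le> power_domination_number (cart_V V (path_V 2)) (cart_E E path_adj)
          \<and> power_domination_number (cart_V V (path_V 2)) (cart_E E path_adj)
              \<le> min (domination_number V E) (zero_forcing_number V E))
       \<and> (power_domination_number V E = domination_number V E \<longrightarrow>
          (\<forall>n\<ge>1. power_domination_number (cart_V V (path_V n)) (cart_E E path_adj)
                   = domination_number V E))"
proof -
  have fin: "finite V" using assms(1) by (simp add: simple_graph_def)
  have A: "\<forall>n\<ge>1.
            power_domination_number V E
              \<le> power_domination_number (cart_V V (path_V n)) (cart_E E path_adj)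
          \<and> power_domination_number (cart_V V (path_V n)) (cart_E E path_adj)
              \<le> domination_number V E"
    using L1[OF fin] L2[OF fin] by simp
  have B: "power_domination_number (cart_V V (path_V 2)) (cart_E E path_adj)
              \<le> min (domination_number V E) (zero_forcing_number V E)"
    using L2[OF fin, of 2 E] L3[OF fin, of E] by simp
  have C: "power_domination_number V E
              \<le> power_domination_number (cart_V V (path_V 2)) (cart_E E path_adj)"
    using L1[OF fin, of 2 E] by simp
  have D: "power_domination_number V E = domination_number V E \<longrightarrow>
          (\<forall>n\<ge>1. power_domination_number (cart_V V (path_V n)) (cart_E E path_adj)
                   = domination_number V E)"
  proof (intro impI allI)
    fix n :: nat assume eq: "power_domination_number V E = domination_number V E" and n: "n \<ge> 1"
    have "power_domination_number V E
              \<le> power_domination_number (cart_V V (path_V n)) (cart_E E path_adj)"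
      by (rule L1[OF fin n])
    moreover have "power_domination_number (cart_V V (path_V n)) (cart_E E path_adj)
              \<le> domination_number V E" by (rule L2[OF fin n])
    ultimately show "power_domination_number (cart_V V (path_V n)) (cart_E E path_adj)
                   = domination_number V E" using eq by linarith
  qed
  show ?thesis using A B C D by (intro conjI)
qed

end
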